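(* Let $r\ge3$ be an integer, let $\mathscr C$ be a class of graphs with sub-exponential expansion, and let $g$ be an integer such that every graph in $\mathscr C$ with girth at least $g$ is $(r+1)$-path degenerate. Then every graph $G\in\mathscr C$ with maximum degree $\Delta\ge3$ and $\mathrm{girth}(G)\ge g$ that is not a forest satisfies $a'_r(G)=\max\{\Delta,r\}$.
   Context: Graphs are finite and simple; the girth is the length of a shortest cycle. For an integer $r\ge3$, $a'_r(G)$ is the minimum number of colors in a proper edge coloring of $G$ such that every cycle $C$ of $G$ receives at least $\min\{|C|,r\}$ distinct colors. A strict ear of a graph $G$ is a path of $G$ whose internal vertices all have degree $2$ in $G$ and whose two endpoints are distinct. For an integer $p\ge1$, a $p$-reduction of $G$ is the deletion of either an isolated vertex, or a vertex of degree $1$, or the internal vertices of a strict ear of $G$ of length at least $p$. A graph is $p$-path degenerate if it can be reduced to the empty graph by a sequence of $p$-reductions. A class $\mathscr C$ has sub-exponential expansion if $\sup\{\nabla_r(G):G\in\mathscr C\}=2^{o(r)}$, where $\nabla_r(G)$ is the maximum of $|E(H)|/|V(H)|$ over nonempty shallow minors $H$ of $G$ at depth $r$ (minors obtained by contracting vertex-disjoint subgraphs of radius at most $r$ and deleting vertices and edges). *)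

theory Defs
  imports Complex_Main "HOL-Library.Extended_Real"
begin

definition graph :: "'a set \<Rightarrow> 'a set set \<Rightarrow> bool" where
  "graph V E \<longleftrightarrow> finite V \<and> (\<forall>e\<in>E. \<exists>u v. u \<noteq> v \<and> e = {u, v} \<and> u \<in> V \<and> v \<in> V)"

definition degree :: "'a set set \<Rightarrow> 'a \<Rightarrow> nat" where
  "degree E v = card {e\<in>E. v \<in> e}"

definition max_degree :: "'a set \<Rightarrow> 'a set set \<Rightarrow> nat" where
  "max_degree V E = Max (degree E ` V)"

definition is_path :: "'a set \<Rightarrow> 'a set set \<Rightarrow> 'a list \<Rightarrow> bool" where
  "is_path V E xs \<longleftrightarrow> xs \<noteq> [] \<and> distinct xs \<and> set xs \<subseteq> V \<and>
     (\<forall>i. Suc i < length xs \<longrightarrow> {xs ! i, xs ! Suc i} \<in> E)"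

definition is_cycle :: "'a set \<Rightarrow> 'a set set \<Rightarrow> 'a list \<Rightarrow> bool" where
  "is_cycle V E xs \<longleftrightarrow> length xs \<ge> 3 \<and> distinct xs \<and> set xs \<subseteq> V \<and>
     (\<forall>i < length xs. {xs ! i, xs ! ((i + 1) mod length xs)} \<in> E)"

definition cycle_edges :: "'a list \<Rightarrow> 'a set set" where
  "cycle_edges xs = {{xs ! i, xs ! ((i + 1) mod length xs)} | i. i < length xs}"

text \<open>girth(G) \<ge> g: every cycle has length at least g (forests have infinite girth).\<close>
definition girth_ge :: "'a set \<Rightarrow> 'a set set \<Rightarrow> int \<Rightarrow> bool" where
  "girth_ge V E g \<longleftrightarrow> (\<forall>xs. is_cycle V E xs \<longrightarrow> int (length xs) \<ge> g)"

definition forest :: "'a set \<Rightarrow> 'a set set \<Rightarrow> bool" where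
  "forest V E \<longleftrightarrow> \<not> (\<exists>xs. is_cycle V E xs)"

definition proper_edge_col :: "'a set set \<Rightarrow> ('a set \<Rightarrow> nat) \<Rightarrow> bool" where
  "proper_edge_col E c \<longleftrightarrow> (\<forall>e\<in>E. \<forall>f\<in>E. e \<noteq> f \<and> e \<inter> f \<noteq> {} \<longrightarrow> c e \<noteq> c f)"

definition r_acyclic_col :: "nat \<Rightarrow> 'a set \<Rightarrow> 'a set set \<Rightarrow> ('a set \<Rightarrow> nat) \<Rightarrow> bool" where
  "r_acyclic_col r V E c \<longleftrightarrow> proper_edge_col E c \<and>
     (\<forall>xs. is_cycle V E xs \<longrightarrow> card (c ` cycle_edges xs) \<ge> min (length xs) r)"

definition acyc_index :: "nat \<Rightarrow> 'a set \<Rightarrow> 'a set set \<Rightarrow> nat" where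
  "acyc_index r V E = (LEAST k. \<exists>c. r_acyclic_col r V E c \<and> c ` E \<subseteq> {..<k})"

definition del_V :: "'a set \<Rightarrow> 'a set \<Rightarrow> 'a set" where
  "del_V V S = V - S"
definition del_E :: "'a set set \<Rightarrow> 'a set \<Rightarrow> 'a set set" where
  "del_E E S = {e\<in>E. e \<inter> S = {}}"

text \<open>Strict ear: path whose internal vertices have degree 2 and whose endpoints are distinct;
  its length is the number of edges.\<close>
definition strict_ear :: "'a set \<Rightarrow> 'a set set \<Rightarrow> 'a list \<Rightarrow> bool" where
  "strict_ear V E xs \<longleftrightarrow> is_path V E xs \<and> hd xs \<noteq> last xs \<and>
     (\<forall>v \<in> set (butlast (tl xs)). degree E v = 2)"

definition p_reduction :: "nat \<Rightarrow> 'a set \<Rightarrow> 'a set set \<Rightarrow> 'a set \<Rightarrow> 'a set set \<Rightarrow> bool" where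
  "p_reduction p V E V' E' \<longleftrightarrow>
     (\<exists>v\<in>V. (degree E v = 0 \<or> degree E v = 1) \<and> V' = del_V V {v} \<and> E' = del_E E {v}) \<or>
     (\<exists>xs. strict_ear V E xs \<and> length xs - 1 \<ge> p \<and>
        V' = del_V V (set (butlast (tl xs))) \<and> E' = del_E E (set (butlast (tl xs))))"

inductive path_degenerate :: "nat \<Rightarrow> 'a set \<Rightarrow> 'a set set \<Rightarrow> bool" for p where
  empty: "path_degenerate p {} {}"
| step: "p_reduction p V E V' E' \<Longrightarrow> path_degenerate p V' E' \<Longrightarrow> path_degenerate p V E"

text \<open>Shallow minors at depth r, represented canonically with the branch sets as vertices.\<close>
definition walk_within :: "'a set set \<Rightarrow> 'a set \<Rightarrow> 'a list \<Rightarrow> bool" where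
  "walk_within E X xs \<longleftrightarrow> xs \<noteq> [] \<and> set xs \<subseteq> X \<and>
     (\<forall>i. Suc i < length xs \<longrightarrow> {xs ! i, xs ! Suc i} \<in> E)"

definition radius_le :: "'a set set \<Rightarrow> 'a set \<Rightarrow> nat \<Rightarrow> bool" where
  "radius_le E X r \<longleftrightarrow> (\<exists>c\<in>X. \<forall>x\<in>X. \<exists>xs. walk_within E X xs \<and> hd xs = c \<and> last xs = x
                                          \<and> length xs \<le> r + 1)"

definition shallow_minor :: "nat \<Rightarrow> 'a set \<Rightarrow> 'a set set \<Rightarrow> 'a set set \<Rightarrow> 'a set set set \<Rightarrow> bool" where
  "shallow_minor r V E W F \<longleftrightarrow>
     (\<forall>X\<in>W. X \<noteq> {} \<and> X \<subseteq> V \<and> radius_le E X r) \<and>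
     (\<forall>X\<in>W. \<forall>Y\<in>W. X \<noteq> Y \<longrightarrow> X \<inter> Y = {}) \<and>
     (\<forall>f\<in>F. \<exists>X Y. X \<in> W \<and> Y \<in> W \<and> X \<noteq> Y \<and> f = {X, Y} \<and> (\<exists>x\<in>X. \<exists>y\<in>Y. {x, y} \<in> E))"

definition nabla :: "nat \<Rightarrow> 'a set \<Rightarrow> 'a set set \<Rightarrow> ereal" where
  "nabla r V E = Sup {ereal (real (card F) / real (card W)) | W F. shallow_minor r V E W F \<and> W \<noteq> {}}"

text \<open>sup over the class of nabla_r is 2^{o(r)}.\<close>
definition subexp_expansion :: "('a set \<times> 'a set set) set \<Rightarrow> bool" where
  "subexp_expansion C \<longleftrightarrow>
     (\<forall>\<epsilon>>0. \<exists>N. \<forall>r\<ge>N. (SUP G\<in>C. nabla r (fst G) (snd G)) \<le> ereal (2 powr (\<epsilon> * real r)))"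

end

theory Submission
  imports Defs
begin



lemma graph_finE: "graph V E \<Longrightarrow> finite E"
proof -
  assume g: "graph V E"
  have "E \<subseteq> Pow V"
  proof
    fix e assume "e \<in> E"
    then obtain u v where "e = {u, v}" "u \<in> V" "v \<in> V" using g unfolding graph_def by blast
    thus "e \<in> Pow V" by simp
  qed
  moreover have "finite (Pow V)" using g unfolding graph_def by simp
  ultimately show ?thesis by (rule finite_subset)
qed

lemma graph_del: "graph V E \<Longrightarrow> graph (del_V V S) (del_E E S)"
proof -
  assume g: "graph V E"
  have "\<exists>u v. u \<noteq> v \<and> e = {u, v} \<and> u \<in> V - S \<and> v \<in> V - S" if e: "e \<in> E" "e \<inter> S = {}" for e
  proof -
    obtain u v where uv: "u \<noteq> v" "e = {u, v}" "u \<in> V" "v \<in> V" using g e(1) unfolding graph_def by blast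
    hence "u \<notin> S" "v \<notin> S" using e(2) by auto
    thus ?thesis using uv by blast
  qed
  moreover have "finite (V - S)" using g unfolding graph_def by simp
  ultimately show ?thesis unfolding graph_def del_V_def del_E_def by simp
qed

lemma card2_eq: "finite A \<Longrightarrow> card A \<le> 2 \<Longrightarrow> x \<in> A \<Longrightarrow> y \<in> A \<Longrightarrow> x \<noteq> y \<Longrightarrow> A = {x, y}"
proof -
  assume a: "finite A" "card A \<le> 2" "x \<in> A" "y \<in> A" "x \<noteq> y"
  have "{x,y} \<subseteq> A" using a by auto
  moreover have "card {x,y} = 2" using a by auto
  ultimately show ?thesis using card_seteq[OF a(1) \<open>{x,y} \<subseteq> A\<close>] a(2) by simp
qed

lemma card2_ge: "finite A \<Longrightarrow> x \<in> A \<Longrightarrow> y \<in> A \<Longrightarrow> x \<noteq> y \<Longrightarrow> card A \<ge> 2"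
proof -
  assume a: "finite A" "x \<in> A" "y \<in> A" "x \<noteq> y"
  have "{x,y} \<subseteq> A" using a by auto
  hence "card {x,y} \<le> card A" using a card_mono by blast
  thus ?thesis using a by auto
qed

lemma cyc_edges_sub: "is_cycle V E cs \<Longrightarrow> cycle_edges cs \<subseteq> E"
  unfolding is_cycle_def cycle_edges_def by auto

lemma cyc_edge_vert: "is_cycle V E cs \<Longrightarrow> e \<in> cycle_edges cs \<Longrightarrow> e \<subseteq> set cs"
proof -
  assume c: "is_cycle V E cs" and e: "e \<in> cycle_edges cs"
  then obtain i where i: "i < length cs" "e = {cs ! i, cs ! ((i + 1) mod length cs)}"
    unfolding cycle_edges_def by blast
  have "(i + 1) mod length cs < length cs" by (rule mod_less_divisor) (use i(1) in linarith)
  thus ?thesis using i nth_mem by auto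
qed

lemma cyc_edges_img: "cycle_edges cs = (\<lambda>i. {cs ! i, cs ! ((i + 1) mod length cs)}) ` {..<length cs}"
  unfolding cycle_edges_def by auto

lemma cyc_card: "card (cycle_edges cs) \<le> length cs"
  unfolding cyc_edges_img using card_image_le[OF finite_lessThan, of _ "length cs"] by simp

lemma cyc_fin: "finite (cycle_edges cs)"
  unfolding cyc_edges_img by simp

lemma cyc_two_edges:
  assumes c: "is_cycle V E cs" and w: "w \<in> set cs"
  shows "\<exists>e1 e2. e1 \<noteq> e2 \<and> e1 \<in> cycle_edges cs \<and> e2 \<in> cycle_edges cs \<and> w \<in> e1 \<and> w \<in> e2"
proof -
  let ?n = "length cs"
  have n3: "?n \<ge> 3" and d: "distinct cs" using c unfolding is_cycle_def by auto
  obtain i where i: "i < ?n" "w = cs ! i" using w by (metis in_set_conv_nth)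
  define j where "j = (i + ?n - 1) mod ?n"
  define i' where "i' = (i + 1) mod ?n"
  have ar: "j < ?n \<and> (j + 1) mod ?n = i \<and> j \<noteq> i \<and> i' < ?n \<and> i' \<noteq> i \<and> i' \<noteq> j"
  proof (cases "i = 0")
    case True
    have jv: "j = ?n - 1" unfolding j_def using True n3 by simp
    have iv: "i' = 1" unfolding i'_def using True n3 by simp
    have "j + 1 = ?n" using jv n3 by simp
    hence "(j + 1) mod ?n = 0" by simp
    moreover have "j < ?n" "j \<noteq> i" "i' < ?n" "i' \<noteq> i" "i' \<noteq> j" using jv iv n3 True by arith+
    ultimately show ?thesis using True by simp
  next
    case False
    note i0 = False
    have "i + ?n - 1 = (i - 1) + ?n" using i0 by simp
    hence "j = (i - 1 + ?n) mod ?n" unfolding j_def by simp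
    also have "\<dots> = (i - 1) mod ?n" by (rule mod_add_self2)
    also have "\<dots> = i - 1" using i by simp
    finally have jj: "j = i - 1" .
    show ?thesis
    proof (cases "i + 1 = ?n")
      case True
      hence "i' = 0" unfolding i'_def by simp
      moreover have "j < ?n" "(j + 1) mod ?n = i" "j \<noteq> i" "i' < ?n" "i' \<noteq> i" "i' \<noteq> j"
        using jj n3 i0 i True \<open>i' = 0\<close> by auto
      ultimately show ?thesis by simp
    next
      case F2: False
      hence "i' = i + 1" unfolding i'_def using i by simp
      moreover have "j < ?n" "(j + 1) mod ?n = i" "j \<noteq> i" "i' < ?n" "i' \<noteq> i" "i' \<noteq> j"
        using jj n3 i0 i F2 \<open>i' = i + 1\<close> by auto
      ultimately show ?thesis by simp
    qed
  qed
  define e1 where "e1 = {cs ! j, cs ! ((j + 1) mod ?n)}"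
  define e2 where "e2 = {cs ! i, cs ! i'}"
  have jn: "(j + 1) mod ?n = i" "j < ?n" using ar by blast+
  have "e1 \<in> cycle_edges cs" unfolding e1_def cycle_edges_def using jn(2) by blast
  moreover have "e2 \<in> cycle_edges cs" unfolding e2_def i'_def cycle_edges_def using i(1) by blast
  moreover have "w \<in> e1" unfolding e1_def jn(1) i(2) by simp
  moreover have "w \<in> e2" unfolding e2_def i(2) by simp
  moreover have "e1 \<noteq> e2"
  proof
    assume "e1 = e2"
    hence eq: "{cs ! j, cs ! i} = {cs ! i, cs ! i'}" unfolding e1_def e2_def jn(1) by simp
    have ne: "cs ! j \<noteq> cs ! i" "cs ! i' \<noteq> cs ! i" "cs ! j \<noteq> cs ! i'"
      using ar i(1) nth_eq_iff_index_eq[OF d] by metis+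
    from eq ne show False unfolding doubleton_eq_iff by blast
  qed
  ultimately show ?thesis by blast
qed

lemma cyc_deg2:
  assumes c: "is_cycle V E cs" and w: "w \<in> set cs" and f: "finite E"
  shows "degree E w \<ge> 2" and "degree E w \<le> 2 \<Longrightarrow> {e\<in>E. w \<in> e} \<subseteq> cycle_edges cs"
proof -
  obtain e1 e2 where e: "e1 \<noteq> e2" "e1 \<in> cycle_edges cs" "e2 \<in> cycle_edges cs" "w \<in> e1" "w \<in> e2"
    using cyc_two_edges[OF c w] by blast
  have s: "cycle_edges cs \<subseteq> E" by (rule cyc_edges_sub[OF c])
  have fin: "finite {e\<in>E. w \<in> e}" using f by simp
  have in12: "e1 \<in> {e\<in>E. w \<in> e}" "e2 \<in> {e\<in>E. w \<in> e}" using e s by auto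
  show "degree E w \<ge> 2" unfolding degree_def using card2_ge[OF fin in12 e(1)] .
  assume "degree E w \<le> 2"
  hence "{e\<in>E. w \<in> e} = {e1, e2}" using card2_eq[OF fin _ in12 e(1)] unfolding degree_def by blast
  thus "{e\<in>E. w \<in> e} \<subseteq> cycle_edges cs" using e by auto
qed

lemma cyc_del: "is_cycle V E cs \<Longrightarrow> set cs \<inter> S = {} \<Longrightarrow> is_cycle (del_V V S) (del_E E S) cs"
proof -
  assume c: "is_cycle V E cs" and s: "set cs \<inter> S = {}"
  have "\<forall>i < length cs. {cs ! i, cs ! ((i + 1) mod length cs)} \<inter> S = {}"
  proof (intro allI impI)
    fix i assume i: "i < length cs"
    have "(i + 1) mod length cs < length cs" by (rule mod_less_divisor) (use i in linarith)
    hence "{cs ! i, cs ! ((i + 1) mod length cs)} \<subseteq> set cs" using i nth_mem by auto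
    thus "{cs ! i, cs ! ((i + 1) mod length cs)} \<inter> S = {}" using s by blast
  qed
  thus ?thesis using c s unfolding is_cycle_def del_V_def del_E_def by auto
qed




definition nxt :: "nat \<Rightarrow> nat \<Rightarrow> nat" where
  "nxt x y = (if 0 \<noteq> x \<and> 0 \<noteq> y then 0 else if 1 \<noteq> x \<and> 1 \<noteq> y then 1 else 2)"

fun pad :: "nat \<Rightarrow> nat \<Rightarrow> nat \<Rightarrow> nat list" where
  "pad x 0 y = []"
| "pad x (Suc m) y = nxt x y # pad (nxt x y) m y"

lemma nxt_ne: "nxt x y \<noteq> x" "nxt x y \<noteq> y" "nxt x y \<le> 2"
  unfolding nxt_def by auto

lemma pad_len: "length (pad x m y) = m"
  by (induction m arbitrary: x) auto

lemma pad_set: "set (pad x m y) \<subseteq> {..<3}"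
  by (induction m arbitrary: x) (auto simp: nxt_def)

lemma pad_ok: "(m = 0 \<longrightarrow> x \<noteq> y) \<Longrightarrow> successively (\<noteq>) (x # pad x m y @ [y])"
proof (induction m arbitrary: x)
  case 0
  then show ?case by simp
next
  case (Suc m)
  have "successively (\<noteq>) (nxt x y # pad (nxt x y) m y @ [y])"
    using Suc.IH nxt_ne by blast
  then show ?case using nxt_ne(1)[of x y] by (simp add: eq_commute)
qed

lemma ear_seq:
  assumes r3: "3 \<le> r" and rk: "r \<le> k" and rL: "r + 1 \<le> L" and c1: "c1 < k" and cL: "cL < k"
  shows "\<exists>sq. length sq = L \<and> sq ! 0 = c1 \<and> sq ! (L - 1) = cL \<and> successively (\<noteq>) sq
           \<and> set sq \<subseteq> {..<k} \<and> r \<le> card (set sq)"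
proof -
  define B where "B = {c1, cL}"
  have cB: "card B \<le> 2" "card B \<ge> 1" unfolding B_def by (auto simp: card_insert_if)
  have Bk: "B \<subseteq> {..<k}" unfolding B_def using c1 cL by auto
  have "card ({..<k} - B) = k - card B" using Bk by (simp add: card_Diff_subset finite_subset)
  hence "r - card B \<le> card ({..<k} - B)" using rk by simp
  then obtain T where T: "T \<subseteq> {..<k} - B" "card T = r - card B" "finite T"
    by (metis obtain_subset_with_card_n)
  define ds where "ds = sorted_list_of_set T"
  have ds: "set ds = T" "distinct ds" "length ds = r - card B"
    unfolding ds_def using T by auto
  define x where "x = last (c1 # ds)"
  define m where "m = L - 2 - length ds"
  define sq where "sq = (c1 # ds) @ (pad x m cL @ [cL])"
  have lsq: "length sq = L" unfolding sq_def m_def using ds cB rL r3 by (simp add: pad_len)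
  have s1: "successively (\<noteq>) (c1 # ds)"
  proof -
    have "successively (\<noteq>) ds" using ds(2) by (induction ds) (auto simp: successively_Cons)
    moreover have "ds \<noteq> [] \<Longrightarrow> c1 \<noteq> hd ds" using T ds(1) unfolding B_def
      by (metis DiffE hd_in_set insertCI subsetD)
    ultimately show ?thesis by (cases ds) auto
  qed
  have xne: "m = 0 \<longrightarrow> x \<noteq> cL"
  proof (cases ds)
    case Nil
    hence "card B = r" using ds(3) cB r3 by simp
    thus ?thesis using cB r3 by simp
  next
    case (Cons a l)
    hence "x \<in> T" unfolding x_def using ds(1) by (metis last_ConsR last_in_set list.distinct(1))
    thus ?thesis using T unfolding B_def by auto
  qed
  have s2: "successively (\<noteq>) (x # pad x m cL @ [cL])" by (rule pad_ok[OF xne])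
  have succ: "successively (\<noteq>) sq"
  proof -
    have "successively (\<noteq>) (pad x m cL @ [cL])" using s2 by (simp add: successively_Cons)
    moreover have "x \<noteq> hd (pad x m cL @ [cL])" using s2 by (cases "pad x m cL @ [cL]") auto
    ultimately show ?thesis unfolding sq_def using s1
      by (subst successively_append_iff) (simp add: x_def)
  qed
  have "set sq \<subseteq> {..<k}" unfolding sq_def using c1 cL T ds(1) pad_set[of x m cL] r3 rk by auto
  moreover have "r \<le> card (set sq)"
  proof -
    have "B \<union> T \<subseteq> set sq" unfolding sq_def B_def using ds(1) by auto
    moreover have "card (B \<union> T) = r" using T cB r3 by (subst card_Un_disjoint) (auto simp: B_def)
    ultimately show ?thesis by (metis card_mono List.finite_set)
  qed
  moreover have "sq ! 0 = c1" unfolding sq_def by simp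
  moreover have "sq ! (L - 1) = cL"
  proof -
    have "last sq = cL" unfolding sq_def by simp
    thus ?thesis using lsq rL by (metis last_conv_nth list.size(3) not_one_le_zero add_leE)
  qed
  ultimately show ?thesis using lsq succ by blast
qed




locale ear =
  fixes V :: "'a set" and E :: "'a set set" and xs :: "'a list" and p :: nat
  assumes G: "graph V E" and se: "strict_ear V E xs" and len: "p \<le> length xs - 1" and p2: "2 \<le> p"
begin

definition L where "L = length xs - 1"
definition ed where "ed i = {xs ! i, xs ! Suc i}"
definition S where "S = set (butlast (tl xs))"
definition EE where "EE = ed ` {..<L}"

lemma finE: "finite E" using graph_finE[OF G] .

lemma dist: "distinct xs" using se unfolding strict_ear_def is_path_def by auto
lemma lenx: "length xs = Suc L" unfolding L_def using len p2 by auto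
lemma L2: "2 \<le> L" "p \<le> L" unfolding L_def using len p2 by auto
lemma xsV: "i \<le> L \<Longrightarrow> xs ! i \<in> V"
  using se lenx unfolding strict_ear_def is_path_def by (auto simp: less_Suc_eq_le[symmetric])

lemma ed_in: "i < L \<Longrightarrow> ed i \<in> E"
  using se lenx unfolding strict_ear_def is_path_def ed_def by auto

lemma xs_inj: "i \<le> L \<Longrightarrow> j \<le> L \<Longrightarrow> xs ! i = xs ! j \<longleftrightarrow> i = j"
  using dist lenx by (simp add: nth_eq_iff_index_eq)

lemma ed_inj: "i < L \<Longrightarrow> j < L \<Longrightarrow> ed i = ed j \<Longrightarrow> i = j"
  unfolding ed_def by (auto simp: doubleton_eq_iff xs_inj)

lemma mem_ed: "i < L \<Longrightarrow> j \<le> L \<Longrightarrow> xs ! j \<in> ed i \<longleftrightarrow> (j = i \<or> j = Suc i)"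
  unfolding ed_def using xs_inj by auto

lemma S_char: "w \<in> S \<longleftrightarrow> (\<exists>j. 0 < j \<and> j < L \<and> w = xs ! j)"
proof -
  have l: "length (butlast (tl xs)) = L - 1" using lenx by simp
  have n: "j < L - 1 \<Longrightarrow> butlast (tl xs) ! j = xs ! Suc j" for j
    using lenx by (simp add: nth_butlast nth_tl)
  show ?thesis unfolding S_def in_set_conv_nth l
    by (metis (no_types, opaque_lifting) Suc_pred less_diff_conv n Suc_eq_plus1 less_Suc_eq_0_disj
          zero_less_Suc gr0_conv_Suc)
qed

lemma deg_int: "0 < j \<Longrightarrow> j < L \<Longrightarrow> degree E (xs ! j) = 2"
  using se S_char unfolding strict_ear_def S_def[symmetric] by blast

lemma edges_at_int: "0 < j \<Longrightarrow> j < L \<Longrightarrow> {e\<in>E. xs ! j \<in> e} = {ed (j - 1), ed j}"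
proof -
  assume j: "0 < j" "j < L"
  have a: "ed (j - 1) \<in> {e\<in>E. xs ! j \<in> e}" using j ed_in mem_ed by auto
  have b: "ed j \<in> {e\<in>E. xs ! j \<in> e}" using j ed_in mem_ed by auto
  have "ed (j - 1) \<noteq> ed j"
  proof
    assume "ed (j - 1) = ed j"
    hence "j - 1 = j" using ed_inj j by (metis less_imp_diff_less)
    thus False using j by simp
  qed
  thus ?thesis using card2_eq[OF _ _ a b] finE deg_int[OF j] unfolding degree_def by auto
qed

lemma ends_notS: "xs ! 0 \<notin> S" "xs ! L \<notin> S"
  using S_char xs_inj by auto

lemma E_split: "E = del_E E S \<union> EE" "EE \<inter> del_E E S = {}"
proof -
  have "e \<in> EE" if ee: "e \<in> E" "e \<inter> S \<noteq> {}" for e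
  proof -
    obtain w where "w \<in> e" "w \<in> S" using ee by blast
    then obtain j where j: "0 < j" "j < L" "w = xs ! j" using S_char by blast
    hence "e \<in> {ed (j - 1), ed j}" using edges_at_int \<open>w \<in> e\<close> ee(1) by blast
    thus ?thesis unfolding EE_def using j by auto
  qed
  moreover have "ed i \<inter> S \<noteq> {}" if "i < L" for i
  proof (cases "i = 0")
    case True
    have "xs ! 1 \<in> S" using S_char L2 by auto
    thus ?thesis using True unfolding ed_def by auto
  next
    case False
    hence "xs ! i \<in> S" using S_char that by auto
    thus ?thesis unfolding ed_def by auto
  qed
  moreover have "EE \<subseteq> E" unfolding EE_def using ed_in by auto
  ultimately show "E = del_E E S \<union> EE" "EE \<inter> del_E E S = {}"
    unfolding del_E_def EE_def by blast+
qed

lemma ed_at0: "i < L \<Longrightarrow> xs ! 0 \<in> ed i \<Longrightarrow> i = 0"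
  using mem_ed by auto
lemma ed_atL: "i < L \<Longrightarrow> xs ! L \<in> ed i \<Longrightarrow> i = L - 1"
  using mem_ed by auto

lemma ed_notS: "i < L \<Longrightarrow> w \<in> ed i \<Longrightarrow> w \<notin> S \<Longrightarrow> (w = xs ! 0 \<and> i = 0) \<or> (w = xs ! L \<and> i = L - 1)"
proof -
  assume a: "i < L" "w \<in> ed i" "w \<notin> S"
  hence "w = xs ! i \<or> w = xs ! Suc i" unfolding ed_def by auto
  thus ?thesis using a S_char by (metis Suc_lessI bot_nat_0.not_eq_extremum diff_Suc_1 zero_less_Suc)
qed

lemma deg_end_less: "degree (del_E E S) (xs ! 0) < degree E (xs ! 0)"
  "degree (del_E E S) (xs ! L) < degree E (xs ! L)"
proof -
  have sub: "{e\<in>del_E E S. w \<in> e} \<subseteq> {e\<in>E. w \<in> e}" for w unfolding del_E_def by auto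
  have fin: "finite {e\<in>E. w \<in> e}" for w using finE by simp
  have "ed 0 \<in> EE" "ed (L - 1) \<in> EE" unfolding EE_def using L2 by auto
  hence n0: "ed 0 \<notin> del_E E S" "ed (L - 1) \<notin> del_E E S" using E_split(2) by blast+
  have lt: "{e\<in>del_E E S. w \<in> e} \<subset> {e\<in>E. w \<in> e}" if "x \<in> {e\<in>E. w \<in> e}" "x \<notin> del_E E S" for w x
    using sub[of w] that by blast
  have "ed 0 \<in> {e\<in>E. xs ! 0 \<in> e}" using ed_in[of 0] mem_ed[of 0 0] L2 by simp
  from lt[OF this n0(1)] show "degree (del_E E S) (xs ! 0) < degree E (xs ! 0)" unfolding degree_def
    by (rule psubset_card_mono[OF fin])
  have "L - 1 < L" using L2 by simp
  hence "ed (L - 1) \<in> {e\<in>E. xs ! L \<in> e}" using ed_in[of "L - 1"] mem_ed[of "L - 1" L] L2 by simp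
  from lt[OF this n0(2)] show "degree (del_E E S) (xs ! L) < degree E (xs ! L)" unfolding degree_def
    by (rule psubset_card_mono[OF fin])
qed

lemma int_on_cycle:
  assumes c: "is_cycle V E cs" and j: "0 < j" "j < L" and w: "xs ! j \<in> set cs"
  shows "ed (j - 1) \<in> cycle_edges cs" "ed j \<in> cycle_edges cs"
proof -
  have "degree E (xs ! j) \<le> 2" using deg_int[OF j] by simp
  hence "{e\<in>E. xs ! j \<in> e} \<subseteq> cycle_edges cs" by (rule cyc_deg2(2)[OF c w finE])
  thus "ed (j - 1) \<in> cycle_edges cs" "ed j \<in> cycle_edges cs" unfolding edges_at_int[OF j] by auto
qed

lemma cyc_all:
  assumes c: "is_cycle V E cs" and i: "i < L" "ed i \<in> cycle_edges cs"
  shows "j < L \<Longrightarrow> ed j \<in> cycle_edges cs"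
proof -
  have step: "ed (j - 1) \<in> cycle_edges cs \<longleftrightarrow> ed j \<in> cycle_edges cs" if j: "0 < j" "j < L" for j
  proof
    assume "ed (j - 1) \<in> cycle_edges cs"
    moreover have "xs ! j \<in> ed (j - 1)" using j mem_ed by simp
    ultimately have "xs ! j \<in> set cs" using cyc_edge_vert[OF c] by blast
    thus "ed j \<in> cycle_edges cs" by (rule int_on_cycle(2)[OF c j])
  next
    assume "ed j \<in> cycle_edges cs"
    moreover have "xs ! j \<in> ed j" using j mem_ed by simp
    ultimately have "xs ! j \<in> set cs" using cyc_edge_vert[OF c] by blast
    thus "ed (j - 1) \<in> cycle_edges cs" by (rule int_on_cycle(1)[OF c j])
  qed
  have h: "j < L \<longrightarrow> (ed j \<in> cycle_edges cs \<longleftrightarrow> ed 0 \<in> cycle_edges cs)" for j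
  proof (induction j)
    case 0 then show ?case by simp
  next
    case (Suc j)
    show ?case
    proof
      assume "Suc j < L"
      hence "ed j \<in> cycle_edges cs \<longleftrightarrow> ed (Suc j) \<in> cycle_edges cs" using step[of "Suc j"] by simp
      thus "ed (Suc j) \<in> cycle_edges cs \<longleftrightarrow> ed 0 \<in> cycle_edges cs" using Suc \<open>Suc j < L\<close> by simp
    qed
  qed
  have "ed 0 \<in> cycle_edges cs" using h[of i] i by simp
  thus "j < L \<Longrightarrow> ed j \<in> cycle_edges cs" using h[of j] by simp
qed

lemma cyc_hit:
  assumes c: "is_cycle V E cs" and h: "set cs \<inter> S \<noteq> {}"
  shows "EE \<subseteq> cycle_edges cs"
proof -
  obtain w where "w \<in> set cs" "w \<in> S" using h by blast
  then obtain j where j: "0 < j" "j < L" "w = xs ! j" "w \<in> set cs" using S_char by blast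
  hence "ed j \<in> cycle_edges cs" using int_on_cycle(2)[OF c j(1,2)] by simp
  hence "ed i \<in> cycle_edges cs" if "i < L" for i using cyc_all[OF c j(2)] that by blast
  thus ?thesis unfolding EE_def by auto
qed

lemma card_EE: "card EE = L"
  unfolding EE_def by (subst card_image) (auto intro: inj_onI ed_inj)

end



lemma free_col: "finite A \<Longrightarrow> card A < k \<Longrightarrow> \<exists>x<k. x \<notin> A"
proof (rule ccontr)
  assume a: "finite A" "card A < k" "\<not> (\<exists>x<k. x \<notin> A)"
  hence "{..<k} \<subseteq> A" by auto
  hence "k \<le> card A" using a(1) by (metis card_lessThan card_mono)
  thus False using a by simp
qed

lemma deg_mono: "E' \<subseteq> E \<Longrightarrow> finite E \<Longrightarrow> degree E' w \<le> degree E w"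
  unfolding degree_def by (rule card_mono) auto

lemma del_E_sub: "del_E E S \<subseteq> E" unfolding del_E_def by auto

lemma cyc_edges_del: "is_cycle (del_V V S) (del_E E S) cs \<Longrightarrow> cycle_edges cs \<subseteq> del_E E S"
  by (rule cyc_edges_sub)

lemma pd_girth:
  "path_degenerate p V E \<Longrightarrow> graph V E \<Longrightarrow> 2 \<le> p \<Longrightarrow> is_cycle V E cs \<Longrightarrow> p \<le> length cs"
proof (induction V E arbitrary: cs rule: path_degenerate.induct)
  case empty
  then show ?case unfolding is_cycle_def by auto
next
  case (step V E V' E')
  from step.hyps(1) consider
      v where "v \<in> V" "degree E v = 0 \<or> degree E v = 1" "V' = del_V V {v}" "E' = del_E E {v}"
    | xs where "strict_ear V E xs" "p \<le> length xs - 1"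
        "V' = del_V V (set (butlast (tl xs)))" "E' = del_E E (set (butlast (tl xs)))"
    unfolding p_reduction_def by blast
  then show ?case
  proof cases
    fix v assume v: "v \<in> V" "degree E v = 0 \<or> degree E v = 1" and eq: "V' = del_V V {v}" "E' = del_E E {v}"
    have "v \<notin> set cs" using cyc_deg2(1)[OF step.prems(3) _ graph_finE[OF step.prems(1)]] v by fastforce
    hence "is_cycle V' E' cs" using cyc_del[OF step.prems(3)] eq by auto
    thus ?thesis using step.IH graph_del[OF step.prems(1)] eq step.prems(2) by auto
  next
    fix xs assume se: "strict_ear V E xs" "p \<le> length xs - 1"
      and eq: "V' = del_V V (set (butlast (tl xs)))" "E' = del_E E (set (butlast (tl xs)))"
    interpret ear V E xs p using se step.prems by unfold_locales auto
    show ?thesis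
    proof (cases "set cs \<inter> S = {}")
      case True
      hence "is_cycle V' E' cs" using cyc_del[OF step.prems(3)] eq unfolding S_def by auto
      thus ?thesis using step.IH graph_del[OF step.prems(1)] eq step.prems(2) by auto
    next
      case False
      hence "EE \<subseteq> cycle_edges cs" using cyc_hit step.prems(3) by blast
      hence "card EE \<le> card (cycle_edges cs)" by (simp add: card_mono cyc_fin)
      thus ?thesis using card_EE cyc_card[of cs] L2 by simp
    qed
  qed
qed




lemma r_acyc_empty: "r_acyclic_col r {} {} (\<lambda>_. 0)"
  unfolding r_acyclic_col_def proper_edge_col_def is_cycle_def by auto

lemma free_col2:
  assumes "finite E" "E' \<subseteq> E" "degree E' u < k"
  shows "\<exists>x<k. x \<notin> c ` {f\<in>E'. u \<in> f}"
proof -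
  have fin: "finite {f\<in>E'. u \<in> f}" by (rule finite_subset[of _ E]) (use assms in auto)
  have "card (c ` {f\<in>E'. u \<in> f}) \<le> degree E' u" unfolding degree_def by (rule card_image_le[OF fin])
  hence "card (c ` {f\<in>E'. u \<in> f}) < k" using assms(3) by linarith
  thus ?thesis using free_col[OF finite_imageI[OF fin]] by blast
qed

lemma pd_col:
  "path_degenerate p V E \<Longrightarrow> graph V E \<Longrightarrow> p = Suc r \<Longrightarrow> 3 \<le> r \<Longrightarrow> r \<le> k \<Longrightarrow>
   (\<forall>v\<in>V. degree E v \<le> k) \<Longrightarrow> \<exists>c. r_acyclic_col r V E c \<and> c ` E \<subseteq> {..<k}"
proof (induction V E rule: path_degenerate.induct)
  case empty
  then show ?case using r_acyc_empty by blast
next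
  case (step V E V' E')
  have finE: "finite E" using graph_finE[OF step.prems(1)] .
  have degk: "\<forall>v\<in>V. degree E v \<le> k" using step.prems by blast
  from step.hyps(1) consider
      v where "v \<in> V" "degree E v = 0 \<or> degree E v = 1" "V' = del_V V {v}" "E' = del_E E {v}"
    | xs where "strict_ear V E xs" "p \<le> length xs - 1"
        "V' = del_V V (set (butlast (tl xs)))" "E' = del_E E (set (butlast (tl xs)))"
    unfolding p_reduction_def by blast
  then show ?case
  proof cases
    fix v assume v: "v \<in> V" "degree E v = 0 \<or> degree E v = 1" and eq: "V' = del_V V {v}" "E' = del_E E {v}"
    have gE': "graph V' E'" using graph_del[OF step.prems(1)] eq by simp
    have E'E: "E' \<subseteq> E" using eq del_E_sub by simp
    have "\<forall>w\<in>V'. degree E' w \<le> k"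
    proof
      fix w assume "w \<in> V'"
      hence "w \<in> V" using eq unfolding del_V_def by auto
      thus "degree E' w \<le> k" using le_trans[OF deg_mono[OF E'E finE, of w]] degk by blast
    qed
    then obtain c where c: "r_acyclic_col r V' E' c" "c ` E' \<subseteq> {..<k}" using step.IH gE' step.prems by blast
    have cyc: "is_cycle V' E' cs" if "is_cycle V E cs" for cs
    proof -
      have "v \<notin> set cs" using cyc_deg2(1)[OF that _ finE] v by fastforce
      thus ?thesis using cyc_del[OF that] eq by auto
    qed
    show ?thesis
    proof (cases "degree E v = 0")
      case True
      hence "{e\<in>E. v \<in> e} = {}" using finE unfolding degree_def by simp
      hence "E' = E" using eq unfolding del_E_def by auto
      hence "r_acyclic_col r V E c" using c(1) cyc unfolding r_acyclic_col_def by auto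
      thus ?thesis using c(2) \<open>E' = E\<close> by blast
    next
      case False
      hence "card {e\<in>E. v \<in> e} = 1" using v unfolding degree_def by simp
      then obtain e0 where e0: "{e\<in>E. v \<in> e} = {e0}" using card_1_singletonE by blast
      hence e0E: "e0 \<in> E" "v \<in> e0" by auto
      obtain x y where xy: "x \<noteq> y" "e0 = {x, y}" "x \<in> V" "y \<in> V"
        using step.prems(1) e0E(1) unfolding graph_def by blast
      obtain u where u: "u \<noteq> v" "e0 = {v, u}" "u \<in> V"
      proof (cases "v = x")
        case True thus ?thesis using that[of y] xy by auto
      next
        case False hence "v = y" using xy e0E by auto
        thus ?thesis using that[of x] xy by auto
      qed
      have E'eq: "E' = E - {e0}" using eq e0 unfolding del_E_def by auto
      have "{f\<in>E'. u \<in> f} \<subset> {f\<in>E. u \<in> f}" using E'eq e0E u by auto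
      hence "degree E' u < degree E u" unfolding degree_def using finE by (simp add: psubset_card_mono)
      hence "degree E' u < k" using degk u(3) by (meson less_le_trans)
      then obtain c0 where c0: "c0 < k" "c0 \<notin> c ` {f\<in>E'. u \<in> f}"
        using free_col2[OF finE E'E] by blast
      define c' where "c' = c(e0 := c0)"
      have agree: "e \<in> E' \<Longrightarrow> c' e = c e" for e unfolding c'_def using E'eq by auto
      have mixed: "f \<in> E \<Longrightarrow> f \<noteq> e0 \<Longrightarrow> e0 \<inter> f \<noteq> {} \<Longrightarrow> c' e0 \<noteq> c' f" for f
      proof -
        assume f: "f \<in> E" "f \<noteq> e0" "e0 \<inter> f \<noteq> {}"
        have fE': "f \<in> E'" using f E'eq by auto
        hence "v \<notin> f" using eq unfolding del_E_def by auto
        hence "u \<in> f" using f u by auto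
        thus ?thesis using c0 fE' agree unfolding c'_def by auto
      qed
      have P1: "proper_edge_col E c'"
        unfolding proper_edge_col_def
      proof (intro ballI impI)
        fix e f assume ef: "e \<in> E" "f \<in> E" "e \<noteq> f \<and> e \<inter> f \<noteq> {}"
        show "c' e \<noteq> c' f"
        proof (cases "e = e0")
          case True thus ?thesis using mixed ef by auto
        next
          case False
          show ?thesis
          proof (cases "f = e0")
            case True
            have "c' e0 \<noteq> c' e" using mixed[of e] ef True False by (auto simp: Int_commute)
            thus ?thesis using True by simp
          next
            case F2: False
            hence "e \<in> E'" "f \<in> E'" using False ef E'eq by auto
            moreover have "proper_edge_col E' c" using c(1) unfolding r_acyclic_col_def by blast
            ultimately have "c e \<noteq> c f" using ef unfolding proper_edge_col_def by blast
            thus ?thesis using agree \<open>e \<in> E'\<close> \<open>f \<in> E'\<close> by simp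
          qed
        qed
      qed
      have P2: "card (c' ` cycle_edges cs) \<ge> min (length cs) r" if "is_cycle V E cs" for cs
      proof -
        have cc: "is_cycle V' E' cs" using cyc that .
        have "c' ` cycle_edges cs = c ` cycle_edges cs"
          using cyc_edges_sub[OF cc] agree by (intro image_cong) auto
        moreover have "card (c ` cycle_edges cs) \<ge> min (length cs) r" using c(1) cc unfolding r_acyclic_col_def by blast
        ultimately show ?thesis by simp
      qed
      have P3: "c' ` E \<subseteq> {..<k}"
      proof
        fix y assume "y \<in> c' ` E"
        then obtain e where e: "e \<in> E" "y = c' e" by auto
        show "y \<in> {..<k}"
        proof (cases "e = e0")
          case True thus ?thesis using e c0 unfolding c'_def by simp
        next
          case False
          hence "e \<in> E'" using e E'eq by simp
          thus ?thesis using e c(2) agree by auto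
        qed
      qed
      have "r_acyclic_col r V E c'" unfolding r_acyclic_col_def using P1 P2 by blast
      thus ?thesis using P3 by blast
    qed
  next
    fix xs assume se: "strict_ear V E xs" "p \<le> length xs - 1"
      and eq: "V' = del_V V (set (butlast (tl xs)))" "E' = del_E E (set (butlast (tl xs)))"
    interpret ear V E xs p using se step.prems by unfold_locales auto
    have eq': "V' = del_V V S" "E' = del_E E S" using eq unfolding S_def by auto
    have gE': "graph V' E'" using graph_del[OF step.prems(1)] eq' by simp
    have E'E: "E' \<subseteq> E" using eq' del_E_sub by simp
    have "\<forall>w\<in>V'. degree E' w \<le> k"
    proof
      fix w assume "w \<in> V'"
      hence "w \<in> V" using eq' unfolding del_V_def by auto
      thus "degree E' w \<le> k" using le_trans[OF deg_mono[OF E'E finE, of w]] degk by blast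
    qed
    then obtain c where c: "r_acyclic_col r V' E' c" "c ` E' \<subseteq> {..<k}" using step.IH gE' step.prems by blast
    define a where "a = xs ! 0"
    define b where "b = xs ! L"
    have ab: "a \<in> V" "b \<in> V" unfolding a_def b_def using xsV by auto
    have "degree E' a < k"
      using deg_end_less(1) degk ab eq' unfolding a_def by (meson less_le_trans)
    then obtain c1 where c1: "c1 < k" "c1 \<notin> c ` {f\<in>E'. a \<in> f}"
      using free_col2[OF finE E'E] by blast
    have "degree E' b < k"
      using deg_end_less(2) degk ab eq' unfolding b_def by (meson less_le_trans)
    then obtain cL where cL: "cL < k" "cL \<notin> c ` {f\<in>E'. b \<in> f}"
      using free_col2[OF finE E'E] by blast
    obtain sq where sq: "length sq = L" "sq ! 0 = c1" "sq ! (L - 1) = cL" "successively (\<noteq>) sq"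
      "set sq \<subseteq> {..<k}" "r \<le> card (set sq)"
      using ear_seq[of r k L c1 cL] step.prems L2 c1 cL by auto
    define c' where "c' e = (if e \<in> EE then sq ! (SOME i. i < L \<and> e = ed i) else c e)" for e
    have c'ed: "i < L \<Longrightarrow> c' (ed i) = sq ! i" for i
    proof -
      assume i: "i < L"
      have "(SOME j. j < L \<and> ed i = ed j) = i"
        by (rule some_equality) (use i ed_inj in auto)
      thus ?thesis unfolding c'_def EE_def using i by auto
    qed
    have agree: "e \<in> E' \<Longrightarrow> c' e = c e" for e unfolding c'_def using E_split(2) eq' by auto
    have mixed: "c' e \<noteq> c' f" if ef: "e \<in> EE" "f \<in> E" "f \<notin> EE" "e \<inter> f \<noteq> {}" for e f
    proof -
      obtain i where i: "i < L" "e = ed i" using ef unfolding EE_def by auto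
      have fE': "f \<in> E'" using ef E_split(1) eq' by blast
      hence fS: "f \<inter> S = {}" using eq' unfolding del_E_def by auto
      obtain w where w: "w \<in> e" "w \<in> f" using ef by blast
      hence "w \<notin> S" using fS by auto
      hence "(w = a \<and> i = 0) \<or> (w = b \<and> i = L - 1)" using ed_notS i w unfolding a_def b_def by auto
      thus ?thesis
      proof
        assume "w = a \<and> i = 0"
        thus ?thesis using c'ed i sq(2) c1 agree fE' w by auto
      next
        assume "w = b \<and> i = L - 1"
        thus ?thesis using c'ed i sq(3) cL agree fE' w by auto
      qed
    qed
    have P1: "proper_edge_col E c'"
      unfolding proper_edge_col_def
    proof (intro ballI impI)
      fix e f assume ef: "e \<in> E" "f \<in> E" "e \<noteq> f \<and> e \<inter> f \<noteq> {}"
      show "c' e \<noteq> c' f"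
      proof (cases "e \<in> EE")
        case eE: True
        show ?thesis
        proof (cases "f \<in> EE")
          case True
          obtain i where i: "i < L" "e = ed i" using eE unfolding EE_def by auto
          obtain j where j: "j < L" "f = ed j" using True unfolding EE_def by auto
          obtain w where w: "w \<in> ed i" "w \<in> ed j" using ef i j by blast
          have ij: "i \<noteq> j" using ef i j by auto
          have "w = xs ! i \<or> w = xs ! Suc i" using w unfolding ed_def by auto
          hence "i = Suc j \<or> j = Suc i" using mem_ed[of j i] mem_ed[of j "Suc i"] i j w ij by auto
          hence "sq ! i \<noteq> sq ! j"
          proof
            assume "i = Suc j" thus ?thesis using successively_nth[OF sq(4), of j] sq(1) i by auto
          next
            assume "j = Suc i" thus ?thesis using successively_nth[OF sq(4), of i] sq(1) j by auto
          qed
          thus ?thesis using c'ed i j by simp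
        next
          case False thus ?thesis using mixed eE ef by auto
        qed
      next
        case eN: False
        show ?thesis
        proof (cases "f \<in> EE")
          case True
          have "c' f \<noteq> c' e" using mixed[of f e] eN ef True by (auto simp: Int_commute)
          thus ?thesis by simp
        next
          case False
          hence "e \<in> E'" "f \<in> E'" using eN ef E_split(1) eq' by auto
          moreover have "proper_edge_col E' c" using c(1) unfolding r_acyclic_col_def by blast
            ultimately have "c e \<noteq> c f" using ef unfolding proper_edge_col_def by blast
            thus ?thesis using agree \<open>e \<in> E'\<close> \<open>f \<in> E'\<close> by simp
        qed
      qed
    qed
    have P2: "card (c' ` cycle_edges cs) \<ge> min (length cs) r" if cs: "is_cycle V E cs" for cs
    proof (cases "set cs \<inter> S = {}")
      case True
      have cc: "is_cycle V' E' cs" using cyc_del[OF cs True] eq' by simp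
      have "c' ` cycle_edges cs = c ` cycle_edges cs"
        using cyc_edges_sub[OF cc] agree by (intro image_cong) auto
      moreover have "card (c ` cycle_edges cs) \<ge> min (length cs) r" using c(1) cc unfolding r_acyclic_col_def by blast
        ultimately show ?thesis by simp
    next
      case False
      hence "EE \<subseteq> cycle_edges cs" using cyc_hit cs by blast
      hence "c' ` EE \<subseteq> c' ` cycle_edges cs" by auto
      moreover have "c' ` EE = set sq"
      proof -
        have "c' ` EE = (\<lambda>i. sq ! i) ` {..<L}" unfolding EE_def image_image using c'ed by auto
        also have "\<dots> = set sq" using sq(1) by (auto simp: in_set_conv_nth)
        finally show ?thesis .
      qed
      ultimately have "card (set sq) \<le> card (c' ` cycle_edges cs)"
        by (metis card_mono cyc_fin finite_imageI)
      thus ?thesis using sq(6) by simp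
    qed
    have P3: "c' ` E \<subseteq> {..<k}"
    proof
      fix y assume "y \<in> c' ` E"
      then obtain e where e: "e \<in> E" "y = c' e" by auto
      show "y \<in> {..<k}"
      proof (cases "e \<in> EE")
        case True
        then obtain i where i: "i < L" "e = ed i" unfolding EE_def by auto
        hence "sq ! i \<in> set sq" using sq(1) by simp
        hence "sq ! i < k" using sq(5) by auto
        thus ?thesis using c'ed e i by auto
      next
        case False
        hence "e \<in> E'" using e E_split(1) eq' by auto
        thus ?thesis using c(2) agree e by auto
      qed
    qed
    have "r_acyclic_col r V E c'" unfolding r_acyclic_col_def using P1 P2 by blast
    thus ?thesis using P3 by blast
  qed
qed




theorem mainTheorem15:
  fixes C :: "('a set \<times> 'a set set) set" and r :: nat and g :: int
    and V :: "'a set" and E :: "'a set set"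
  assumes "r \<ge> 3"
    and "\<forall>G\<in>C. graph (fst G) (snd G)"
    and "subexp_expansion C"
    and "\<forall>G\<in>C. girth_ge (fst G) (snd G) g \<longrightarrow> path_degenerate (r + 1) (fst G) (snd G)"
    and "(V, E) \<in> C"
    and "max_degree V E \<ge> 3"
    and "girth_ge V E g"
    and "\<not> forest V E"
  shows "acyc_index r V E = max (max_degree V E) r"
proof -
  have gr: "graph V E" using assms(2) assms(5) by (metis fst_conv snd_conv)
  have pd: "path_degenerate (r + 1) V E" using assms(4) assms(5) assms(7) by (metis fst_conv snd_conv)
  obtain cs where cs: "is_cycle V E cs" using assms(8) unfolding forest_def by blast
  have lc: "r + 1 \<le> length cs" by (rule pd_girth[OF pd gr _ cs]) (use assms(1) in simp)
  have finV: "finite V" using gr unfolding graph_def by simp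
  have finE: "finite E" by (rule graph_finE[OF gr])
  have "set cs \<subseteq> V" "cs \<noteq> []" using cs unfolding is_cycle_def by auto
  hence Vne: "V \<noteq> {}" by (metis set_empty subset_empty)
  define D where "D = max_degree V E"
  have degD: "degree E v \<le> D" if "v \<in> V" for v
    unfolding D_def max_degree_def using finV that by simp
  have "D \<in> degree E ` V" unfolding D_def max_degree_def by (rule Max_in) (use finV Vne in auto)
  then obtain v0 where v0: "v0 \<in> V" "degree E v0 = D" by auto
  define k0 where "k0 = max D r"
  define P where "P k = (\<exists>c. r_acyclic_col r V E c \<and> c ` E \<subseteq> {..<k})" for k
  have Pk0: "P k0" unfolding P_def
  proof (rule pd_col[OF pd gr])
    show "r + 1 = Suc r" by simp
    show "3 \<le> r" using assms(1) .
    show "r \<le> k0" unfolding k0_def by simp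
    show "\<forall>v\<in>V. degree E v \<le> k0" using degD unfolding k0_def by fastforce
  qed
  have low: "k0 \<le> k" if "P k" for k
  proof -
    obtain c where c: "r_acyclic_col r V E c" "c ` E \<subseteq> {..<k}" using \<open>P k\<close> unfolding P_def by blast
    have pr: "proper_edge_col E c" using c(1) unfolding r_acyclic_col_def by blast
    define A where "A = {e\<in>E. v0 \<in> e}"
    have "inj_on c A"
    proof (rule inj_onI)
      fix e f assume ef: "e \<in> A" "f \<in> A" "c e = c f"
      show "e = f"
      proof (rule ccontr)
        assume "e \<noteq> f"
        moreover have "e \<inter> f \<noteq> {}" using ef unfolding A_def by auto
        ultimately have "c e \<noteq> c f" using pr ef unfolding proper_edge_col_def A_def by blast
        thus False using ef by simp
      qed
    qed
    hence "card (c ` A) = D" using v0 unfolding A_def degree_def by (simp add: card_image)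
    moreover have "c ` A \<subseteq> {..<k}" using c(2) unfolding A_def by auto
    ultimately have Dk: "D \<le> k" by (metis card_lessThan card_mono finite_lessThan)
    have "min (length cs) r \<le> card (c ` cycle_edges cs)" using c(1) cs unfolding r_acyclic_col_def by blast
    hence "r \<le> card (c ` cycle_edges cs)" using lc by simp
    moreover have "c ` cycle_edges cs \<subseteq> {..<k}" using c(2) cyc_edges_sub[OF cs] by auto
    ultimately have "r \<le> k" by (metis card_lessThan card_mono finite_lessThan le_trans)
    thus ?thesis using Dk unfolding k0_def by simp
  qed
  have "acyc_index r V E = (LEAST k. P k)" unfolding acyc_index_def P_def by simp
  also have "\<dots> = k0" by (rule Least_equality[of P, OF Pk0 low])
  finally show ?thesis unfolding k0_def D_def .
qed


end
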